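(* Let $b\ge 3$ be an integer, $n=2^{b-2}$, $W^f\in\mathbb{R}^N$ with components of pairwise distinct absolute values, and $\mu>0$. Define $\tilde Q\in\mathbb{R}^N$ componentwise by $$\tilde Q_i=\begin{cases}0 & \text{if } |W^f_i|<\tfrac{2^{2-n}}{3}\mu,\\ \mathrm{sign}(W^f_i)\,2^{1-n} & \text{if } \tfrac{2^{2-n}}{3}\mu\le |W^f_i|<2^{2-n}\mu,\\ \mathrm{sign}(W^f_i)\,2^{-t} & \text{if } 2^{-t}\mu\le |W^f_i|<2^{-t+1}\mu,\quad t=1,\dots,n-2,\\ \mathrm{sign}(W^f_i) & \text{if } \mu\le |W^f_i|,\end{cases}$$ and assume $\tilde Q\neq 0$. For $t=0,\dots,n-1$ let $\tilde k_t$ be the number of indices $i$ with $|\tilde Q_i|=2^{-t}$. Then $$\tilde s^*=\left\lfloor \log_2\frac{4\sum_{t=0}^{n-1}2^{-t}\|W^f_{[\tilde k_t]}\|_1}{3\sum_{t=0}^{n-1}\tilde k_t\,2^{-2t}}\right\rfloor$$ minimizes $\|2^s\tilde Q-W^f\|_2^2$ over all $s\in\mathbb{Z}$.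
   Context: Notation: sort the indices of $W^f$ by decreasing $|W^f_i|$. Given nonnegative integers $k_0,\dots,k_{n-1}$ with $\sum_t k_t\le N$, the vector $W^f_{[k_0]}\in\mathbb{R}^N$ keeps the $k_0$ components of $W^f$ of largest magnitude and sets all other components to zero; $W^f_{[k_1]}$ keeps the next $k_1$ largest-magnitude components (those ranked $k_0+1,\dots,k_0+k_1$) and zeros out all others; in general $W^f_{[k_t]}$ keeps the components ranked $k_0+\dots+k_{t-1}+1,\dots,k_0+\dots+k_t$ in magnitude and zeros out the rest. $\mathrm{sign}$ is applied componentwise with $\mathrm{sign}(0)=0$. $\lfloor\cdot\rfloor$ is the floor function and $\|\cdot\|_1$ the $\ell^1$ norm. *)

theory Defs
  imports Complex_Main
begin

text \<open>Vectors in R^N are represented as functions nat => real, only the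
  components with index i < N being relevant. n = 2^(b-2).\<close>

definition nlev :: "nat \<Rightarrow> nat" where
  "nlev b = 2 ^ (b - 2)"

definition Qt :: "nat \<Rightarrow> real \<Rightarrow> (nat \<Rightarrow> real) \<Rightarrow> nat \<Rightarrow> real" where
  "Qt b \<mu> W i =
    (let n = nlev b; w = \<bar>W i\<bar> in
     if w < 2 powr (2 - real n) / 3 * \<mu> then 0
     else if w < 2 powr (2 - real n) * \<mu> then sgn (W i) * 2 powr (1 - real n)
     else if \<mu> \<le> w then sgn (W i)
     else if (\<exists>t::nat\<in>{1..n-2}. 2 powr (- real t) * \<mu> \<le> w \<and> w < 2 powr (- real t + 1) * \<mu>)
       then sgn (W i) * 2 powr (- real (THE t::nat. t \<in> {1..n-2} \<and>
                2 powr (- real t) * \<mu> \<le> w \<and> w < 2 powr (- real t + 1) * \<mu>))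
     else 0)"

definition kt :: "nat \<Rightarrow> real \<Rightarrow> (nat \<Rightarrow> real) \<Rightarrow> nat \<Rightarrow> nat \<Rightarrow> nat" where
  "kt b \<mu> W N t = card {i. i < N \<and> \<bar>Qt b \<mu> W i\<bar> = 2 powr (- real t)}"

text \<open>0-based rank of index i when indices are sorted by decreasing |W_i|
  (well defined since the absolute values are pairwise distinct).\<close>
definition rank :: "(nat \<Rightarrow> real) \<Rightarrow> nat \<Rightarrow> nat \<Rightarrow> nat" where
  "rank W N i = card {j. j < N \<and> \<bar>W i\<bar> < \<bar>W j\<bar>}"

text \<open>|| W_[k_t] ||_1 for a sequence k_0, k_1, ...: the l1 norm of the block of
  components ranked k_0+...+k_{t-1}+1, ..., k_0+...+k_t (1-based).\<close>
definition block_l1 :: "(nat \<Rightarrow> real) \<Rightarrow> nat \<Rightarrow> (nat \<Rightarrow> nat) \<Rightarrow> nat \<Rightarrow> real" where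
  "block_l1 W N k t =
     (\<Sum>i\<in>{i. i < N \<and> (\<Sum>u<t. k u) \<le> rank W N i \<and> rank W N i < (\<Sum>u\<le>t. k u)}. \<bar>W i\<bar>)"

definition sstar :: "nat \<Rightarrow> real \<Rightarrow> (nat \<Rightarrow> real) \<Rightarrow> nat \<Rightarrow> int" where
  "sstar b \<mu> W N =
    (let n = nlev b; k = kt b \<mu> W N in
     \<lfloor>log 2 ((4 * (\<Sum>t<n. 2 powr (- real t) * block_l1 W N k t)) /
              (3 * (\<Sum>t<n. real (k t) * 2 powr (- 2 * real t))))\<rfloor>)"

definition sqerr :: "nat \<Rightarrow> real \<Rightarrow> (nat \<Rightarrow> real) \<Rightarrow> nat \<Rightarrow> int \<Rightarrow> real" where
  "sqerr b \<mu> W N s = (\<Sum>i<N. (2 powr (real_of_int s) * Qt b \<mu> W i - W i)\<^sup>2)"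

end

theory Submission imports Defs begin

lemma nlev_ge2: "b \<ge> 3 \<Longrightarrow> nlev b \<ge> 2"
proof -
  assume "b \<ge> 3"
  then have "(2::nat)^1 \<le> 2^(b-2)" by (intro power_increasing) auto
  then show ?thesis by (simp add: nlev_def)
qed

lemma qt_cases:
  assumes b: "b \<ge> 3" and mu: "\<mu> > 0"
  shows "(Qt b \<mu> W i = 0 \<and> \<bar>W i\<bar> < 2 powr (2 - real (nlev b)) / 3 * \<mu>) \<or>
    (\<exists>t<nlev b. Qt b \<mu> W i = sgn (W i) * 2 powr (- real t) \<and>
       2 powr (2 - real (nlev b)) / 3 * \<mu> \<le> \<bar>W i\<bar> \<and>
       (t \<le> nlev b - 2 \<longrightarrow> 2 powr (- real t) * \<mu> \<le> \<bar>W i\<bar>) \<and>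
       (1 \<le> t \<longrightarrow> \<bar>W i\<bar> < 2 powr (1 - real t) * \<mu>))"
proof -
  define n where "n = nlev b"
  define w where "w = \<bar>W i\<bar>"
  have n2: "n \<ge> 2" using nlev_ge2[OF b] by (simp add: n_def)
  define P where "P = (\<lambda>t::nat. 2 powr (- real t) * \<mu> \<le> w \<and> w < 2 powr (- real t + 1) * \<mu>)"
  have uniq: "t1 = t2" if "P t1" "P t2" for t1 t2
  proof (rule ccontr)
    assume ne: "t1 \<noteq> t2"
    have *: False if "P a" "P c" "a < c" for a c
    proof -
      have "2 powr (- real c + 1) \<le> 2 powr (- real a)" using \<open>a < c\<close> by (intro powr_mono) auto
      then have "2 powr (- real c + 1) * \<mu> \<le> 2 powr (- real a) * \<mu>" using mu by simp
      then show False using that unfolding P_def by linarith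
    qed
    show False using ne *[OF that] *[OF that(2) that(1)] by linarith
  qed
  show ?thesis
  proof (cases "w < 2 powr (2 - real n) / 3 * \<mu>")
    case True
    then show ?thesis unfolding Qt_def Let_def n_def[symmetric] w_def[symmetric] by simp
  next
    case c1: False
    have Wne: "W i \<noteq> 0" using c1 mu unfolding w_def by (auto simp: not_less mult_le_0_iff)
    show ?thesis
    proof (cases "w < 2 powr (2 - real n) * \<mu>")
      case True
      have Q: "Qt b \<mu> W i = sgn (W i) * 2 powr (1 - real n)"
        using c1 True unfolding Qt_def Let_def n_def[symmetric] w_def[symmetric] by simp
      have "1 - real n = - real (n - 1)" using n2 by simp
      moreover have "2 - real n = 1 - real (n-1)" using n2 by simp
      ultimately show ?thesis using Q c1 True n2 unfolding n_def[symmetric] w_def[symmetric]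
        by (intro disjI2 exI[of _ "n - 1"]) auto
    next
      case c2: False
      show ?thesis
      proof (cases "\<mu> \<le> w")
        case True
        have Q: "Qt b \<mu> W i = sgn (W i)"
          using c1 c2 True unfolding Qt_def Let_def n_def[symmetric] w_def[symmetric] by simp
        show ?thesis using Q c1 True unfolding n_def[symmetric] w_def[symmetric]
          using n2 by (intro disjI2 exI[of _ 0]) auto
      next
        case c3: False
        define t0 where "t0 = (LEAST t. 2 powr (- real t) * \<mu> \<le> w)"
        have Pn: "2 powr (- real (n-2)) * \<mu> \<le> w" using c2 n2 by (simp add: of_nat_diff)
        have t0P: "2 powr (- real t0) * \<mu> \<le> w" unfolding t0_def by (rule LeastI[where P="\<lambda>t. 2 powr (- real t) * \<mu> \<le> w", OF Pn])
        have t0le: "t0 \<le> n - 2" unfolding t0_def by (rule Least_le[where P="\<lambda>t. 2 powr (- real t) * \<mu> \<le> w", OF Pn])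
        have t0pos: "t0 \<noteq> 0" using t0P c3 by (cases "t0 = 0") auto
        have "\<not> 2 powr (- real (t0 - 1)) * \<mu> \<le> w" unfolding t0_def
          by (rule not_less_Least) (use t0pos t0_def in auto)
        moreover have "- real (t0 - 1) = - real t0 + 1" using t0pos by (simp add: of_nat_diff)
        ultimately have up: "w < 2 powr (- real t0 + 1) * \<mu>" by simp
        have ex: "\<exists>t::nat\<in>{1..n-2}. P t" using t0P up t0le t0pos unfolding P_def
          by (intro bexI[of _ t0]) auto
        have Pt0: "P t0" using t0P up unfolding P_def by simp
        have the: "(THE t::nat. t \<in> {1..n-2} \<and> P t) = t0"
        proof (rule the_equality)
          show "t0 \<in> {1..n-2} \<and> P t0" using Pt0 t0le t0pos by simp
        next
          fix t assume "t \<in> {1..n-2} \<and> P t"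
          then show "t = t0" using uniq Pt0 by blast
        qed
        have Q: "Qt b \<mu> W i = sgn (W i) * 2 powr (- real t0)"
          using c1 c2 c3 ex the unfolding Qt_def Let_def n_def[symmetric] w_def[symmetric] P_def
          by simp
        have up': "w < 2 powr (1 - real t0) * \<mu>" using up by (simp add: add.commute)
        have lo: "2 powr (2 - real n) / 3 * \<mu> \<le> w" using c1 by simp
        have "t0 < n" using t0le n2 by simp
        then show ?thesis unfolding n_def[symmetric] w_def[symmetric]
          by (intro disjI2 exI[of _ t0] conjI impI) (use Q lo t0P up' in simp_all)
      qed
    qed
  qed
qed

context
  fixes b :: nat and \<mu> :: real and W :: "nat \<Rightarrow> real"
  assumes b: "b \<ge> 3" and mu: "\<mu> > 0"
begin

lemma abs_lvl:
  assumes "\<bar>Qt b \<mu> W i\<bar> = 2 powr (- real t)"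
  shows "t < nlev b \<and> W i \<noteq> 0 \<and> Qt b \<mu> W i = sgn (W i) * 2 powr (- real t) \<and>
       2 powr (2 - real (nlev b)) / 3 * \<mu> \<le> \<bar>W i\<bar> \<and>
       (t \<le> nlev b - 2 \<longrightarrow> 2 powr (- real t) * \<mu> \<le> \<bar>W i\<bar>) \<and>
       (1 \<le> t \<longrightarrow> \<bar>W i\<bar> < 2 powr (1 - real t) * \<mu>)"
proof -
  from qt_cases[OF b mu, of W i] assms obtain t' where t': "t' < nlev b"
    "Qt b \<mu> W i = sgn (W i) * 2 powr (- real t')"
    "2 powr (2 - real (nlev b)) / 3 * \<mu> \<le> \<bar>W i\<bar>"
    "t' \<le> nlev b - 2 \<longrightarrow> 2 powr (- real t') * \<mu> \<le> \<bar>W i\<bar>"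
    "1 \<le> t' \<longrightarrow> \<bar>W i\<bar> < 2 powr (1 - real t') * \<mu>"
    by auto
  have Wne: "W i \<noteq> 0" using t'(3) mu by (auto simp: mult_le_0_iff)
  have "\<bar>Qt b \<mu> W i\<bar> = 2 powr (- real t')" using t'(2) Wne by (simp add: abs_mult abs_sgn_eq)
  then have "2 powr (- real t) = 2 powr (- real t')" using assms by simp
  then have "t = t'" using powr_inj[of 2 "- real t" "- real t'"] by simp
  then show ?thesis using t' Wne by simp
qed

lemma abs_zero:
  assumes "\<forall>t<nlev b. \<bar>Qt b \<mu> W i\<bar> \<noteq> 2 powr (- real t)"
  shows "Qt b \<mu> W i = 0 \<and> \<bar>W i\<bar> < 2 powr (2 - real (nlev b)) / 3 * \<mu>"
proof -
  have "\<not> (\<exists>t<nlev b. Qt b \<mu> W i = sgn (W i) * 2 powr (- real t) \<and>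
       2 powr (2 - real (nlev b)) / 3 * \<mu> \<le> \<bar>W i\<bar>)"
  proof
    assume "\<exists>t<nlev b. Qt b \<mu> W i = sgn (W i) * 2 powr (- real t) \<and>
       2 powr (2 - real (nlev b)) / 3 * \<mu> \<le> \<bar>W i\<bar>"
    then obtain t where t: "t < nlev b" "Qt b \<mu> W i = sgn (W i) * 2 powr (- real t)"
       "2 powr (2 - real (nlev b)) / 3 * \<mu> \<le> \<bar>W i\<bar>" by blast
    have Wne: "W i \<noteq> 0" using t(3) mu by (auto simp: mult_le_0_iff)
    have "\<bar>Qt b \<mu> W i\<bar> = 2 powr (- real t)" using t(2) Wne by (simp add: abs_mult abs_sgn_eq)
    then show False using assms t(1) by blast
  qed
  then show ?thesis using qt_cases[OF b mu, of W i] by blast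
qed

lemma lvl_order:
  assumes "\<bar>Qt b \<mu> W i\<bar> = 2 powr (- real t1)" "\<bar>Qt b \<mu> W j\<bar> = 2 powr (- real t2)" "t1 < t2"
  shows "\<bar>W j\<bar> < \<bar>W i\<bar>"
proof -
  note i = abs_lvl[OF assms(1)] and j = abs_lvl[OF assms(2)]
  have "t1 \<le> nlev b - 2" using j assms(3) by linarith
  then have "2 powr (- real t1) * \<mu> \<le> \<bar>W i\<bar>" using i by blast
  moreover have "\<bar>W j\<bar> < 2 powr (1 - real t2) * \<mu>" using j assms(3) by auto
  moreover have "2 powr (1 - real t2) \<le> 2 powr (- real t1)" using assms(3) by (intro powr_mono) auto
  then have "2 powr (1 - real t2) * \<mu> \<le> 2 powr (- real t1) * \<mu>" using mu by simp
  ultimately show ?thesis by linarith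
qed

lemma zero_below:
  assumes "\<bar>Qt b \<mu> W i\<bar> = 2 powr (- real t)" "\<forall>u<nlev b. \<bar>Qt b \<mu> W j\<bar> \<noteq> 2 powr (- real u)"
  shows "\<bar>W j\<bar> < \<bar>W i\<bar>"
  using abs_lvl[OF assms(1)] abs_zero[OF assms(2)] by linarith

lemma sq_split:
  "(Qt b \<mu> W i)^2 = (\<Sum>t<nlev b. if \<bar>Qt b \<mu> W i\<bar> = 2 powr (- real t) then 2 powr (- 2 * real t) else 0)
   \<and> Qt b \<mu> W i * W i = (\<Sum>t<nlev b. if \<bar>Qt b \<mu> W i\<bar> = 2 powr (- real t) then 2 powr (- real t) * \<bar>W i\<bar> else 0)"
proof (cases "\<forall>t<nlev b. \<bar>Qt b \<mu> W i\<bar> \<noteq> 2 powr (- real t)")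
  case True
  have z: "Qt b \<mu> W i = 0" using abs_zero[OF True] by blast
  have "\<bar>Qt b \<mu> W i\<bar> \<noteq> 2 powr (- real t)" for t using z by simp
  then show ?thesis using z by simp
next
  case False
  then obtain t0 where t0: "t0 < nlev b" "\<bar>Qt b \<mu> W i\<bar> = 2 powr (- real t0)" by blast
  note l = abs_lvl[OF t0(2)]
  have eq: "(\<bar>Qt b \<mu> W i\<bar> = 2 powr (- real t)) = (t = t0)" for t
    using t0(2) powr_inj[of 2 "- real t" "- real t0"] by auto
  have s1: "(\<Sum>t<nlev b. if \<bar>Qt b \<mu> W i\<bar> = 2 powr (- real t) then f t else 0) = f t0" for f :: "nat \<Rightarrow> real"
    unfolding eq using t0(1) by simp
  have "(Qt b \<mu> W i)^2 = 2 powr (- 2 * real t0)"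
  proof -
    have "(Qt b \<mu> W i)^2 = \<bar>Qt b \<mu> W i\<bar>^2" by simp
    also have "\<dots> = (2 powr (- real t0))^2" using t0 by simp
    also have "\<dots> = 2 powr (- 2 * real t0)" using powr_power[of "2::real" "- real t0" 2] by simp
    finally show ?thesis .
  qed
  moreover have "Qt b \<mu> W i * W i = 2 powr (- real t0) * \<bar>W i\<bar>"
  proof -
    have "Qt b \<mu> W i * W i = 2 powr (- real t0) * (sgn (W i) * W i)" using l by simp
    also have "sgn (W i) * W i = \<bar>W i\<bar>" by (cases "W i > 0"; cases "W i < 0") auto
    finally show ?thesis .
  qed
  ultimately show ?thesis by (simp add: s1)
qed

end


lemma opt_pow2:
  fixes A B :: real and s :: int
  assumes A: "A > 0" and B: "B > 0"
  defines "s0 \<equiv> \<lfloor>log 2 ((4 * B) / (3 * A))\<rfloor>"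
  shows "A * (2 powr s0)^2 - 2 * B * 2 powr s0 \<le> A * (2 powr s)^2 - 2 * B * 2 powr s"
proof -
  define r where "r = (4 * B) / (3 * A)"
  have r: "r > 0" using A B by (simp add: r_def)
  define x where "x = 2 powr (real_of_int s0)"
  define y where "y = 2 powr (real_of_int s)"
  have "x \<le> 2 powr (log 2 r)" unfolding x_def s0_def r_def[symmetric] by (intro powr_mono) auto
  then have xr: "x \<le> r" using r by simp
  have "2 powr (log 2 r) < 2 powr (real_of_int s0 + 1)" unfolding s0_def r_def[symmetric]
    by (intro powr_less_mono) linarith+
  then have rx: "r < 2 * x" using r by (simp add: powr_add x_def)
  have x0: "x > 0" "y > 0" by (simp_all add: x_def y_def)
  have key: "A * x^2 - 2 * B * x \<le> A * y^2 - 2 * B * y"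
  proof (cases "s0 < s")
    case True
    then have "2 powr (real_of_int s0 + 1) \<le> y" unfolding y_def by (intro powr_mono) auto
    then have yx: "2 * x \<le> y" by (simp add: powr_add x_def)
    have "3 * A * x > 2 * B" using rx A unfolding r_def by (simp add: field_simps)
    moreover have "A * (3 * x) \<le> A * (y + x)" using yx A by (intro mult_left_mono) auto
    ultimately have "A * (y + x) \<ge> 2 * B" by simp
    then have "(y - x) * (A * (y + x) - 2 * B) \<ge> 0" using yx x0 by simp
    then show ?thesis by (simp add: algebra_simps power2_eq_square)
  next
    case False
    show ?thesis
    proof (cases "s = s0")
      case True then show ?thesis by (simp add: x_def y_def)
    next
      case False
      with \<open>\<not> s0 < s\<close> have "s + 1 \<le> s0" by linarith
      then have "2 powr (real_of_int s + 1) \<le> x" unfolding x_def by (intro powr_mono) auto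
      then have yx: "2 * y \<le> x" by (simp add: powr_add y_def)
      have "3 * A * x \<le> 4 * B" using xr A unfolding r_def by (simp add: field_simps)
      moreover have "A * (2 * (x + y)) \<le> A * (3 * x)" using yx A by (intro mult_left_mono) auto
      ultimately have "A * (x + y) \<le> 2 * B" by (simp add: algebra_simps)
      then have "(x - y) * (2 * B - A * (x + y)) \<ge> 0" using yx x0 by simp
      then show ?thesis by (simp add: algebra_simps power2_eq_square)
    qed
  qed
  then show ?thesis by (simp add: x_def y_def)
qed


context
  fixes b N :: nat and \<mu> :: real and W :: "nat \<Rightarrow> real"
  assumes b: "b \<ge> 3" and mu: "\<mu> > 0"
    and dist: "\<forall>i<N. \<forall>j<N. i \<noteq> j \<longrightarrow> \<bar>W i\<bar> \<noteq> \<bar>W j\<bar>"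
begin

definition "S t = {i. i < N \<and> \<bar>Qt b \<mu> W i\<bar> = 2 powr (- real t)}"
definition "R i = {j. j < N \<and> \<bar>W i\<bar> < \<bar>W j\<bar>}"

lemma memS: "i \<in> S t \<longleftrightarrow> i < N \<and> \<bar>Qt b \<mu> W i\<bar> = 2 powr (- real t)"
  unfolding S_def by simp

lemma finS: "finite (S t)" unfolding S_def by simp
lemma finR: "finite (R i)" unfolding R_def by simp
lemma kS: "kt b \<mu> W N t = card (S t)" unfolding kt_def S_def ..
lemma rankR: "rank W N i = card (R i)" unfolding rank_def R_def ..

lemma S_disj: "u \<noteq> v \<Longrightarrow> S u \<inter> S v = {}"
  unfolding S_def using powr_inj[of 2 "- real u" "- real v"] by auto

lemma card_US: "card (\<Union>u\<in>I. S u) = (\<Sum>u\<in>I. kt b \<mu> W N u)" if "finite I"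
  unfolding kS using that by (intro card_UN_disjoint) (auto simp: finS S_disj)

lemma US_sub_R: assumes "i \<in> S t" shows "(\<Union>u\<in>{..<t}. S u) \<subseteq> R i"
proof
  fix j assume "j \<in> (\<Union>u\<in>{..<t}. S u)"
  then obtain u where u: "u < t" "j \<in> S u" by auto
  have "\<bar>W i\<bar> < \<bar>W j\<bar>"
    using lvl_order[OF b mu, of W j u i t] u assms unfolding S_def by auto
  then show "j \<in> R i" using u unfolding R_def S_def by auto
qed

lemma R_sub_US: assumes "i \<in> S t" shows "R i \<subseteq> (\<Union>u\<in>{..t}. S u) - {i}"
proof
  fix j assume j: "j \<in> R i"
  then have jN: "j < N" and lt: "\<bar>W i\<bar> < \<bar>W j\<bar>" unfolding R_def by auto
  have "\<not> (\<forall>u<nlev b. \<bar>Qt b \<mu> W j\<bar> \<noteq> 2 powr (- real u))"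
    using zero_below[OF b mu, of W i t j] assms lt unfolding S_def by auto
  then obtain u where u: "\<bar>Qt b \<mu> W j\<bar> = 2 powr (- real u)" by auto
  have "\<not> t < u" using lvl_order[OF b mu, of W i t j u] assms lt u unfolding S_def by auto
  then show "j \<in> (\<Union>u\<in>{..t}. S u) - {i}" using u jN lt unfolding S_def by auto
qed

lemma rank_bounds: assumes "i \<in> S t"
  shows "(\<Sum>u<t. kt b \<mu> W N u) \<le> rank W N i \<and> rank W N i < (\<Sum>u\<le>t. kt b \<mu> W N u)"
proof
  show "(\<Sum>u<t. kt b \<mu> W N u) \<le> rank W N i"
    unfolding rankR card_US[OF finite_lessThan, symmetric]
    by (intro card_mono finR US_sub_R assms)
  have "rank W N i \<le> card ((\<Union>u\<in>{..t}. S u) - {i})"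
    unfolding rankR by (intro card_mono R_sub_US assms) (auto simp: finS)
  also have "\<dots> < card (\<Union>u\<in>{..t}. S u)"
    using assms by (intro card_Diff1_less) (auto simp: finS)
  also have "\<dots> = (\<Sum>u\<le>t. kt b \<mu> W N u)" by (rule card_US) simp
  finally show "rank W N i < (\<Sum>u\<le>t. kt b \<mu> W N u)" .
qed

lemma rank_inj: "inj_on (rank W N) {..<N}"
proof (rule inj_onI)
  have lt: "rank W N j < rank W N i" if "i < N" "j < N" "\<bar>W i\<bar> < \<bar>W j\<bar>" for i j
  proof -
    have "R j \<subset> R i" unfolding R_def using that by auto
    then show ?thesis unfolding rankR by (intro psubset_card_mono finR)
  qed
  fix i j assume "i \<in> {..<N}" "j \<in> {..<N}" "rank W N i = rank W N j"
  then show "i = j" using lt[of i j] lt[of j i] dist by (cases "\<bar>W i\<bar> < \<bar>W j\<bar>") force+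
qed

lemma S_block: "S t = {i. i < N \<and> (\<Sum>u<t. kt b \<mu> W N u) \<le> rank W N i \<and> rank W N i < (\<Sum>u\<le>t. kt b \<mu> W N u)}"
  (is "_ = ?B")
proof (rule card_seteq)
  show "finite ?B" by simp
  show "S t \<subseteq> ?B" using rank_bounds unfolding S_def by auto
  have "card ?B \<le> card {(\<Sum>u<t. kt b \<mu> W N u)..<(\<Sum>u\<le>t. kt b \<mu> W N u)}"
    by (rule card_inj_on_le[where f="rank W N"]) (auto intro: inj_on_subset[OF rank_inj])
  also have "\<dots> = kt b \<mu> W N t" by (simp add: lessThan_Suc_atMost[symmetric])
  finally show "card ?B \<le> card (S t)" by (simp add: kS)
qed

end


theorem theorem2:
  fixes b N :: nat and \<mu> :: real and W :: "nat \<Rightarrow> real"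
  assumes "b \<ge> 3"
    and "\<forall>i<N. \<forall>j<N. i \<noteq> j \<longrightarrow> \<bar>W i\<bar> \<noteq> \<bar>W j\<bar>"
    and "\<mu> > 0"
    and "\<exists>i<N. Qt b \<mu> W i \<noteq> 0"
  shows "\<forall>s::int. sqerr b \<mu> W N (sstar b \<mu> W N) \<le> sqerr b \<mu> W N s"
proof
  fix s :: int
  note b = assms(1) and dist = assms(2) and mu = assms(3)
  define n where "n = nlev b"
  define k where "k = kt b \<mu> W N"
  define Q where "Q = Qt b \<mu> W"
  define A where "A = (\<Sum>i<N. (Q i)^2)"
  define B where "B = (\<Sum>i<N. Q i * W i)"
  define C where "C = (\<Sum>i<N. (W i)^2)"
  have swap: "(\<Sum>i<N. \<Sum>t<n. if \<bar>Q i\<bar> = 2 powr (- real t) then f t i else 0)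
      = (\<Sum>t<n. \<Sum>i\<in>S b N \<mu> W t. f t i)" for f :: "nat \<Rightarrow> nat \<Rightarrow> real"
  proof -
    have "(\<Sum>i<N. \<Sum>t<n. if \<bar>Q i\<bar> = 2 powr (- real t) then f t i else 0)
       = (\<Sum>t<n. \<Sum>i<N. if \<bar>Q i\<bar> = 2 powr (- real t) then f t i else 0)" by (rule sum.swap)
    also have "\<dots> = (\<Sum>t<n. \<Sum>i\<in>{i \<in> {..<N}. \<bar>Q i\<bar> = 2 powr (- real t)}. f t i)"
      by (rule sum.cong[OF refl], rule sum.inter_filter[symmetric], simp)
    also have "\<dots> = (\<Sum>t<n. \<Sum>i\<in>S b N \<mu> W t. f t i)"
      unfolding Q_def by (intro sum.cong refl) (auto simp: memS[OF b mu dist])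
    finally show ?thesis .
  qed
  have A_eq: "A = (\<Sum>t<n. real (k t) * 2 powr (- 2 * real t))"
  proof -
    have "A = (\<Sum>i<N. \<Sum>t<n. if \<bar>Q i\<bar> = 2 powr (- real t) then 2 powr (- 2 * real t) else 0)"
      unfolding A_def Q_def n_def using sq_split[OF b mu] by (intro sum.cong refl) blast
    also have "\<dots> = (\<Sum>t<n. \<Sum>i\<in>S b N \<mu> W t. 2 powr (- 2 * real t))" by (rule swap)
    also have "\<dots> = (\<Sum>t<n. real (k t) * 2 powr (- 2 * real t))"
      unfolding k_def kS[OF b mu dist] by simp
    finally show ?thesis .
  qed
  have B_eq: "B = (\<Sum>t<n. 2 powr (- real t) * block_l1 W N k t)"
  proof -
    have "B = (\<Sum>i<N. \<Sum>t<n. if \<bar>Q i\<bar> = 2 powr (- real t) then 2 powr (- real t) * \<bar>W i\<bar> else 0)"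
      unfolding B_def Q_def n_def using sq_split[OF b mu] by (intro sum.cong refl) blast
    also have "\<dots> = (\<Sum>t<n. \<Sum>i\<in>S b N \<mu> W t. 2 powr (- real t) * \<bar>W i\<bar>)" by (rule swap)
    also have "\<dots> = (\<Sum>t<n. 2 powr (- real t) * block_l1 W N k t)"
      unfolding block_l1_def k_def S_block[OF b mu dist, symmetric] by (simp add: sum_distrib_left)
    finally show ?thesis .
  qed
  obtain i0 where i0: "i0 < N" "Q i0 \<noteq> 0" using assms(4) Q_def by blast
  have Apos: "A > 0" unfolding A_def
  proof (rule sum_pos2[of _ i0])
    show "(Q i0)^2 > 0" using i0 by simp
  qed (use i0 in auto)
  have QW: "Q i * W i \<ge> 0" for i
    using sq_split[OF b mu, of W i] unfolding Q_def by (auto intro: sum_nonneg)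
  have Bpos: "B > 0" unfolding B_def
  proof (rule sum_pos2[of _ i0])
    have "Q i0 * W i0 \<noteq> 0"
    proof
      assume "Q i0 * W i0 = 0"
      then have "W i0 = 0" using i0 by simp
      then have "Q i0 = 0" unfolding Q_def Qt_def Let_def using mu by simp
      then show False using i0 by simp
    qed
    then show "Q i0 * W i0 > 0" using QW[of i0] by linarith
  qed (use i0 QW in auto)
  have sq: "sqerr b \<mu> W N r = A * (2 powr r)^2 - 2 * B * 2 powr r + C" for r :: int
    unfolding sqerr_def A_def B_def C_def Q_def[symmetric]
    by (simp add: power2_diff sum.distrib sum_subtractf sum_distrib_left sum_distrib_right power_mult_distrib algebra_simps)
  have ss: "sstar b \<mu> W N = \<lfloor>log 2 ((4 * B) / (3 * A))\<rfloor>"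
    unfolding sstar_def Let_def A_eq B_eq n_def k_def ..
  show "sqerr b \<mu> W N (sstar b \<mu> W N) \<le> sqerr b \<mu> W N s"
    unfolding sq ss using opt_pow2[OF Apos Bpos, of s] by simp
qed

end
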